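(* Let $n\ge 3$, let $H_0$ be the cyclic subgroup of $\operatorname{Sym}_n$ generated by $(1,2,\dots,n)$, and let $H$ be a subgroup of $\operatorname{Sym}_n$ with $H_0\subseteq H$. Then $G_n(H)\cong F\times\mathbb{Z}$, where the factor $\mathbb{Z}$ is generated by the (central) image of $z=a_1a_2\cdots a_n$, and $F$ is the group with generators $a_2,\dots,a_n$ and defining relations $$a_2a_3\cdots a_n=a_{\tau(k+1)}\cdots a_{\tau(n)}\,a_{\tau(1)}\cdots a_{\tau(k-1)}$$ for all $\tau\in H$, where $k=\tau^{-1}(1)$.
   Context: For $n\ge 3$ and a subset $H\subseteq\operatorname{Sym}_n$, $G_n(H)$ denotes the group with generators $a_1,\dots,a_n$ and defining relations $a_1a_2\cdots a_n=a_{\sigma(1)}a_{\sigma(2)}\cdots a_{\sigma(n)}$ for all $\sigma\in H$. *)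

theory Defs
  imports "HOL-Algebra.Sym_Groups" "HOL-Algebra.Elementary_Groups" "HOL-Algebra.Generated_Groups"
begin

text \<open>A letter is a generator together with a sign (True = the generator, False = its inverse).
  A word is a list of letters.\<close>

type_synonym 'a word = "('a \<times> bool) list"

definition letter_inv :: "'a \<times> bool \<Rightarrow> 'a \<times> bool" where
  "letter_inv x = (fst x, \<not> snd x)"

inductive pres_eq :: "('a word \<times> 'a word) set \<Rightarrow> 'a word \<Rightarrow> 'a word \<Rightarrow> bool"
  for R where
  refl: "pres_eq R w w"
| sym: "pres_eq R u v \<Longrightarrow> pres_eq R v u"
| trans: "pres_eq R u v \<Longrightarrow> pres_eq R v w \<Longrightarrow> pres_eq R u w"
| cancel: "pres_eq R [x, letter_inv x] []"
| rel: "(u, v) \<in> R \<Longrightarrow> pres_eq R u v"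
| ctxt: "pres_eq R u v \<Longrightarrow> pres_eq R (p @ u @ q) (p @ v @ q)"

definition words_over :: "'a set \<Rightarrow> 'a word set" where
  "words_over S = {w. set (map fst w) \<subseteq> S}"

definition pres_class :: "'a set \<Rightarrow> ('a word \<times> 'a word) set \<Rightarrow> 'a word \<Rightarrow> 'a word set" where
  "pres_class S R w = {v \<in> words_over S. pres_eq R w v}"

definition presented_group :: "'a set \<Rightarrow> ('a word \<times> 'a word) set \<Rightarrow> 'a word set monoid" where
  "presented_group S R =
     \<lparr> carrier = pres_class S R ` words_over S,
       monoid.mult = (\<lambda>A B. {w. \<exists>u\<in>A. \<exists>v\<in>B. w \<in> pres_class S R (u @ v)}),
       one = pres_class S R [] \<rparr>"

definition pos_word :: "nat list \<Rightarrow> nat word" where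
  "pos_word is = map (\<lambda>i. (i, True)) is"

definition n_cycle :: "nat \<Rightarrow> nat \<Rightarrow> nat" where
  "n_cycle n = (\<lambda>i. if 1 \<le> i \<and> i < n then i + 1 else if i = n then 1 else i)"

definition G_rels :: "nat \<Rightarrow> (nat \<Rightarrow> nat) set \<Rightarrow> (nat word \<times> nat word) set" where
  "G_rels n H = {(pos_word [1..<n+1], pos_word (map \<sigma> [1..<n+1])) | \<sigma>. \<sigma> \<in> H}"

definition G_n :: "nat \<Rightarrow> (nat \<Rightarrow> nat) set \<Rightarrow> nat word set monoid" where
  "G_n n H = presented_group {1..n} (G_rels n H)"

definition F_rels :: "nat \<Rightarrow> (nat \<Rightarrow> nat) set \<Rightarrow> (nat word \<times> nat word) set" where
  "F_rels n H = {(pos_word [2..<n+1],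
                  pos_word (map \<tau> ([inv_into {1..n} \<tau> 1 + 1..<n+1] @ [1..<inv_into {1..n} \<tau> 1])))
                 | \<tau>. \<tau> \<in> H}"

definition F_n :: "nat \<Rightarrow> (nat \<Rightarrow> nat) set \<Rightarrow> nat word set monoid" where
  "F_n n H = presented_group {2..n} (F_rels n H)"

end

theory Submission
  imports Defs
begin


definition invw :: "'a word \<Rightarrow> 'a word" where
  "invw xs = rev (map letter_inv xs)"

lemma letter_inv_inv[simp]: "letter_inv (letter_inv x) = x"
  by (simp add: letter_inv_def)

lemma invw_simps[simp]: "invw [] = []" "invw (x#xs) = invw xs @ [letter_inv x]"
  "invw (xs @ ys) = invw ys @ invw xs" "invw (invw xs) = xs"
  by (simp_all add: invw_def rev_map comp_def)

lemmas pe_trans[trans] = pres_eq.trans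

lemma pe_app: "pres_eq R u u' \<Longrightarrow> pres_eq R v v' \<Longrightarrow> pres_eq R (u@v) (u'@v')"
proof -
  assume a: "pres_eq R u u'" and b: "pres_eq R v v'"
  have "pres_eq R ([] @ u @ v) ([] @ u' @ v)" by (rule pres_eq.ctxt[OF a])
  moreover have "pres_eq R (u' @ v @ []) (u' @ v' @ [])" by (rule pres_eq.ctxt[OF b])
  ultimately show ?thesis by (auto intro: pres_eq.trans)
qed

lemma pe_app3: "pres_eq R u u' \<Longrightarrow> pres_eq R (p@u@q) (p@u'@q)"
  by (rule pres_eq.ctxt)

lemma pe_inv_r: "pres_eq R (xs @ invw xs) []"
proof (induction xs)
  case Nil then show ?case by (simp add: pres_eq.refl)
next
  case (Cons x xs)
  have "pres_eq R ([x] @ (xs @ invw xs) @ [letter_inv x]) ([x] @ [] @ [letter_inv x])"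
    by (rule pres_eq.ctxt[OF Cons])
  then have "pres_eq R ((x#xs) @ invw (x#xs)) [x, letter_inv x]" by simp
  then show ?case by (rule pres_eq.trans[OF _ pres_eq.cancel])
qed

lemma pe_inv_l: "pres_eq R (invw xs @ xs) []"
  using pe_inv_r[of R "invw xs"] by simp

lemma pe_cancel_l: "pres_eq R (invw p @ p @ u) u"
proof -
  have "pres_eq R ((invw p @ p) @ u) ([] @ u)" by (rule pe_app[OF pe_inv_l pres_eq.refl])
  then show ?thesis by simp
qed

lemma pe_cancel_r: "pres_eq R (u @ p @ invw p) u"
proof -
  have "pres_eq R (u @ (p @ invw p)) (u @ [])" by (rule pe_app[OF pres_eq.refl pe_inv_r])
  then show ?thesis by simp
qed

lemma pe_cancel_l': "pres_eq R (p @ invw p @ u) u"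
  using pe_cancel_l[of R "invw p" u] by simp

lemma pe_cancel_r': "pres_eq R (u @ invw p @ p) u"
  using pe_cancel_r[of R u "invw p"] by simp

lemma pe_comm_inv:
  assumes "pres_eq R (z @ y) (y @ z)"
  shows "pres_eq R (invw z @ y) (y @ invw z)"
proof -
  have "pres_eq R (invw z @ y) (invw z @ y @ z @ invw z)"
    using pe_cancel_r[of R "invw z @ y" z] by (simp add: pres_eq.sym)
  also have "pres_eq R (invw z @ y @ z @ invw z) (invw z @ z @ y @ invw z)"
    using pe_app3[OF pres_eq.sym[OF assms], of "invw z" "invw z"] by simp
  also have "pres_eq R (invw z @ z @ y @ invw z) (y @ invw z)"
    by (rule pe_cancel_l)
  finally show ?thesis .
qed



lemma cls_eq: "pres_eq R u v \<Longrightarrow> pres_class S R u = pres_class S R v"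
  unfolding pres_class_def using pres_eq.trans pres_eq.sym by blast

lemma cls_eqD: "v \<in> words_over S \<Longrightarrow> pres_class S R u = pres_class S R v \<Longrightarrow> pres_eq R u v"
  unfolding pres_class_def using pres_eq.refl by blast

lemma words_over_simps[simp]:
  "[] \<in> words_over S"
  "(x # u) \<in> words_over S \<longleftrightarrow> fst x \<in> S \<and> u \<in> words_over S"
  "(u @ v) \<in> words_over S \<longleftrightarrow> u \<in> words_over S \<and> v \<in> words_over S"
  by (auto simp: words_over_def)

lemma cls_mult:
  assumes "a \<in> words_over S" "b \<in> words_over S"
  shows "monoid.mult (presented_group S R) (pres_class S R a) (pres_class S R b) = pres_class S R (a@b)" (is "?L = ?R")
proof -
  have "a \<in> pres_class S R a" "b \<in> pres_class S R b"
    using assms by (auto simp: pres_class_def intro: pres_eq.refl)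
  note mem = this
  have eq: "pres_class S R (u @ v) = pres_class S R (a @ b)"
    if "u \<in> pres_class S R a" "v \<in> pres_class S R b" for u v
  proof (rule cls_eq, rule pres_eq.sym, rule pe_app)
    show "pres_eq R a u" using that(1) by (simp add: pres_class_def)
    show "pres_eq R b v" using that(2) by (simp add: pres_class_def)
  qed
  show ?thesis
  proof (intro equalityI subsetI)
    fix x assume "x \<in> ?L"
    then obtain u v where "u \<in> pres_class S R a" "v \<in> pres_class S R b" "x \<in> pres_class S R (u @ v)"
      unfolding presented_group_def by auto
    with eq show "x \<in> ?R" by simp
  next
    fix x assume "x \<in> ?R"
    with mem show "x \<in> ?L" unfolding presented_group_def by auto
  qed
qed

lemma words_over_pos_word[simp]: "pos_word xs \<in> words_over S \<longleftrightarrow> set xs \<subseteq> S"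
  by (force simp: words_over_def pos_word_def)

lemma pos_word_append[simp]: "pos_word (xs @ ys) = pos_word xs @ pos_word ys"
  and pos_word_Cons[simp]: "pos_word (x # xs) = (x, True) # pos_word xs"
  and pos_word_Nil[simp]: "pos_word [] = []"
  by (simp_all add: pos_word_def)



definition wF :: "nat \<Rightarrow> nat word" where "wF n = pos_word [2..<n+1]"
definition zW :: "nat \<Rightarrow> nat word" where "zW n = pos_word [1..<n+1]"
definition th :: "nat \<Rightarrow> nat \<times> bool \<Rightarrow> nat word" where
  "th n x = (if fst x = 1 then (if snd x then invw (wF n) else wF n) else [x])"
definition thet :: "nat \<Rightarrow> nat word \<Rightarrow> nat word" where
  "thet n u = concat (map (th n) u)"
definition cv :: "nat \<times> bool \<Rightarrow> int" where
  "cv x = (if fst x = 1 then (if snd x then 1 else -1) else 0)"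
definition cnt :: "nat word \<Rightarrow> int" where
  "cnt u = sum_list (map cv u)"
definition zp :: "nat \<Rightarrow> int \<Rightarrow> nat word" where
  "zp n m = (if 0 \<le> m then concat (replicate (nat m) (zW n)) else concat (replicate (nat (-m)) (invw (zW n))))"
definition rho :: "nat \<Rightarrow> nat \<Rightarrow> nat \<Rightarrow> nat" where
  "rho n j i = (if 1 \<le> i \<and> i \<le> n then (if i + j \<le> n then i + j else i + j - n) else i)"

lemma thet_simps[simp]: "thet n [] = []" "thet n (x#u) = th n x @ thet n u"
  "thet n (u @ v) = thet n u @ thet n v"
  by (simp_all add: thet_def)

lemma cnt_simps[simp]: "cnt [] = 0" "cnt (x#u) = cv x + cnt u"
  "cnt (u @ v) = cnt u + cnt v"
  by (simp_all add: cnt_def)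

lemma thet_no1: "\<forall>x\<in>set u. fst x \<noteq> 1 \<Longrightarrow> thet n u = u"
  by (induction u) (auto simp: th_def)

lemma thet_pos_word: "1 \<notin> set xs \<Longrightarrow> thet n (pos_word xs) = pos_word xs"
  by (induction xs) (auto simp: th_def)

lemma cnt_pos_word: "1 \<notin> set xs \<Longrightarrow> cnt (pos_word xs) = 0"
  by (induction xs) (auto simp: cv_def)

lemma cnt_invw: "cnt (invw u) = - cnt u"
  by (induction u) (auto simp: cv_def letter_inv_def)

lemma cnt_rep: "cnt (concat (replicate k u)) = int k * cnt u"
  by (induction k) (auto simp: algebra_simps)

lemma zW_eq: "n \<ge> 1 \<Longrightarrow> zW n = (1, True) # wF n"
  using upt_conv_Cons[of 1 "n+1"] by (simp add: zW_def wF_def numeral_2_eq_2)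

lemma set_invw: "set (invw u) = letter_inv ` set u"
  by (simp add: invw_def)

lemma wF_no1: "thet n (wF n) = wF n" "cnt (wF n) = 0" "thet n (invw (wF n)) = invw (wF n)"
proof -
  have "1 \<notin> set [2..<n+1]" by simp
  then show "thet n (wF n) = wF n" "cnt (wF n) = 0"
    unfolding wF_def by (rule thet_pos_word, rule cnt_pos_word)
  show "thet n (invw (wF n)) = invw (wF n)"
    by (rule thet_no1) (auto simp: set_invw letter_inv_def wF_def pos_word_def)
qed

lemma wF_words: "wF n \<in> words_over {2..n}"
  by (auto simp: wF_def)

lemma zW_words: "zW n \<in> words_over {1..n}"
  by (auto simp: zW_def)

lemma words_over_mono: "u \<in> words_over A \<Longrightarrow> A \<subseteq> B \<Longrightarrow> u \<in> words_over B"
  by (auto simp: words_over_def)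

lemma invw_words[simp]: "invw u \<in> words_over S \<longleftrightarrow> u \<in> words_over S"
  by (induction u) (auto simp: letter_inv_def)

lemma rep_words: "u \<in> words_over S \<Longrightarrow> concat (replicate k u) \<in> words_over S"
  by (induction k) auto

lemma zp_words: "zp n m \<in> words_over {1..n}"
  unfolding zp_def using zW_words[of n] by (auto intro!: rep_words)

lemma th_words: "fst x \<in> {1..n} \<Longrightarrow> th n x \<in> words_over {2..n}"
  using wF_words by (auto simp: th_def)

lemma thet_words: "u \<in> words_over {1..n} \<Longrightarrow> thet n u \<in> words_over {2..n}"
  by (induction u) (auto simp: th_words)

lemma cnt_zp: "n \<ge> 1 \<Longrightarrow> cnt (zp n m) = m"
  by (auto simp: zp_def cnt_rep cnt_invw zW_eq wF_no1 cv_def letter_inv_def)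

lemma concat_rep_Suc': "concat (replicate (Suc k) u) = concat (replicate k u) @ u"
  by (induction k) auto

lemma pe_rep_nil: "pres_eq R u [] \<Longrightarrow> pres_eq R (concat (replicate k u)) []"
proof (induction k)
  case 0 then show ?case by (simp add: pres_eq.refl)
next
  case (Suc k)
  then have "pres_eq R (u @ concat (replicate k u)) ([] @ [])" by (intro pe_app)
  then show ?case by simp
qed

lemma thet_zp: "n \<ge> 1 \<Longrightarrow> pres_eq R (thet n (zp n m)) []"
proof -
  assume n: "n \<ge> 1"
  have thet_cr: "thet n (concat (replicate k u)) = concat (replicate k (thet n u))" for k u
    by (induction k) auto
  have a: "pres_eq R (thet n (zW n)) []"
    using n pe_inv_l[of R "wF n"] by (simp add: zW_eq th_def wF_no1)
  have b: "pres_eq R (thet n (invw (zW n))) []"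
    using n pe_inv_l[of R "wF n"] by (simp add: zW_eq th_def wF_no1 letter_inv_def)
  show ?thesis
    using a b by (simp add: zp_def thet_cr pe_rep_nil)
qed



locale setup3 =
  fixes n :: nat and H :: "(nat \<Rightarrow> nat) set"
  assumes n3: "3 \<le> n" and sub: "subgroup H (sym_group n)" and cyc: "n_cycle n \<in> H"
begin

abbreviation "RG \<equiv> G_rels n H"
abbreviation "RF \<equiv> F_rels n H"

lemma H_perm: "\<tau> \<in> H \<Longrightarrow> \<tau> permutes {1..n}"
  using subgroup.subset[OF sub] by (auto simp: sym_group_def)

lemma rho_H: "j \<le> n \<Longrightarrow> rho n j \<in> H"
proof (induction j)
  case 0
  have r: "rho n 0 = id" by (auto simp: rho_def)
  have "\<one>\<^bsub>sym_group n\<^esub> \<in> H" by (rule subgroup.one_closed[OF sub])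
  then have i: "id \<in> H" by (simp add: sym_group_def)
  show ?case by (simp only: r i)
next
  case (Suc j)
  have r: "rho n (Suc j) = n_cycle n \<circ> rho n j"
    using Suc.prems by (auto simp: rho_def n_cycle_def fun_eq_iff)
  have "n_cycle n \<otimes>\<^bsub>sym_group n\<^esub> rho n j \<in> H"
    using subgroup.m_closed[OF sub cyc] Suc by simp
  then have i: "n_cycle n \<circ> rho n j \<in> H" by (simp add: sym_group_def)
  show ?case by (simp only: r i)
qed

lemma rho_map: "j \<le> n \<Longrightarrow> map (rho n j) [1..<n+1] = [j+1..<n+1] @ [1..<j+1]"
  by (rule nth_equalityI) (auto simp: rho_def nth_append)

lemma rel_G: "\<sigma> \<in> H \<Longrightarrow> pres_eq RG (zW n) (pos_word (map \<sigma> [1..<n+1]))"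
  by (rule pres_eq.rel) (auto simp: G_rels_def zW_def)

lemma rot: "j \<le> n \<Longrightarrow> pres_eq RG (zW n) (pos_word ([j+1..<n+1] @ [1..<j+1]))"
  using rel_G[OF rho_H, of j] rho_map[of j] by simp

end

context setup3 begin

lemma central_pos:
  assumes i: "1 \<le> i" "i \<le> n"
  shows "pres_eq RG ([(i,True)] @ zW n) (zW n @ [(i,True)])"
proof -
  define L where "L = pos_word [1..<i]"
  define M where "M = pos_word [i+1..<n+1]"
  have s1: "[1..<n+1] = [1..<i] @ [i..<n+1]" using i upt_add_eq_append[of 1 i "n+1-i"] by simp
  have s2: "[i..<n+1] = i # [i+1..<n+1]" using i by (simp add: upt_conv_Cons)
  have z: "zW n = L @ [(i,True)] @ M" unfolding zW_def L_def M_def s1 s2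
    by (simp only: pos_word_append pos_word_Cons append_Cons append_Nil)
  have r1: "pres_eq RG (zW n) ((i,True) # M @ L)"
  proof -
    have e: "i - 1 + 1 = i" using i by simp
    have "pres_eq RG (zW n) (pos_word ([i - 1 + 1..<n+1] @ [1..<i - 1 + 1]))"
      using i by (intro rot) simp
    then show ?thesis unfolding e s2 L_def M_def
      by (simp only: pos_word_append pos_word_Cons append_Cons append_Nil)
  qed
  have r2: "pres_eq RG (zW n) (M @ L @ [(i,True)])"
  proof -
    have e: "[1..<i+1] = [1..<i] @ [i]" using i by simp
    have "pres_eq RG (zW n) (pos_word ([i+1..<n+1] @ [1..<i+1]))"
      using i by (intro rot) simp
    then show ?thesis unfolding e L_def M_def
      by (simp only: pos_word_append pos_word_Cons pos_word_Nil append_assoc)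
  qed
  have "pres_eq RG ([(i,True)] @ zW n @ []) ([(i,True)] @ (M @ L @ [(i,True)]) @ [])"
    by (rule pe_app3[OF r2])
  also have "[(i,True)] @ (M @ L @ [(i,True)]) @ [] = ((i,True) # M @ L) @ [(i,True)]" by simp
  also have "pres_eq RG (((i,True) # M @ L) @ [(i,True)]) (zW n @ [(i,True)])"
    by (rule pe_app[OF pres_eq.sym[OF r1] pres_eq.refl])
  finally show ?thesis by simp
qed

lemma central_letter:
  assumes "fst x \<in> {1..n}"
  shows "pres_eq RG (zW n @ [x]) ([x] @ zW n)"
proof (cases x)
  case (Pair i b)
  have c: "pres_eq RG ([(i,True)] @ zW n) (zW n @ [(i,True)])"
    using assms Pair by (intro central_pos) auto
  show ?thesis
  proof (cases b)
    case True then show ?thesis using pres_eq.sym[OF c] Pair by simp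
  next
    case False
    have "pres_eq RG (invw [(i,True)] @ zW n) (zW n @ invw [(i,True)])"
      by (rule pe_comm_inv[OF c])
    then show ?thesis using False Pair by (simp add: letter_inv_def pres_eq.sym)
  qed
qed

lemma zcomm: "u \<in> words_over {1..n} \<Longrightarrow> pres_eq RG (zW n @ u) (u @ zW n)"
proof (induction u)
  case Nil then show ?case by (simp add: pres_eq.refl)
next
  case (Cons x u)
  have "pres_eq RG ((zW n @ [x]) @ u) (([x] @ zW n) @ u)"
    using central_letter[of x] Cons.prems by (intro pe_app[OF _ pres_eq.refl]) auto
  also have "([x] @ zW n) @ u = [x] @ (zW n @ u)" by simp
  also have "pres_eq RG ([x] @ (zW n @ u)) ([x] @ (u @ zW n))"
    using Cons by (intro pe_app[OF pres_eq.refl]) auto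
  finally show ?case by simp
qed

lemma decomp:
  assumes "\<tau> \<in> H"
  obtains k where "k \<in> {1..n}" "\<tau> k = 1" "inv_into {1..n} \<tau> 1 = k"
    "[1..<n+1] = [1..<k] @ k # [k+1..<n+1]"
    "set (map \<tau> [1..<k]) \<subseteq> {2..n}" "set (map \<tau> [k+1..<n+1]) \<subseteq> {2..n}"
proof -
  have p: "\<tau> permutes {1..n}" by (rule H_perm[OF assms])
  then have b: "bij_betw \<tau> {1..n} {1..n}" by (rule permutes_imp_bij)
  define k where "k = inv_into {1..n} \<tau> 1"
  have one: "1 \<in> \<tau> ` {1..n}" using bij_betw_imp_surj_on[OF b] n3 by simp
  have k: "k \<in> {1..n}" unfolding k_def by (rule inv_into_into[OF one])
  have tk: "\<tau> k = 1" unfolding k_def by (rule f_inv_into_f[OF one])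
  have ne: "\<tau> j \<in> {2..n}" if "j \<in> {1..n}" "j \<noteq> k" for j
  proof -
    have "\<tau> j \<in> {1..n}" using bij_betwE[OF b] that(1) by blast
    moreover have "\<tau> j \<noteq> 1"
      using inj_onD[OF bij_betw_imp_inj_on[OF b]] that k tk by metis
    ultimately show ?thesis by auto
  qed
  have s1: "[1..<n+1] = [1..<k] @ [k..<n+1]" using k upt_add_eq_append[of 1 k "n+1-k"] by simp
  have s2: "[k..<n+1] = k # [k+1..<n+1]" using k by (simp add: upt_conv_Cons)
  show ?thesis
  proof (rule that[OF k tk k_def[symmetric]])
    show "[1..<n+1] = [1..<k] @ k # [k+1..<n+1]" using s1 s2 by simp
    show "set (map \<tau> [1..<k]) \<subseteq> {2..n}" using k by (auto intro!: ne)
    show "set (map \<tau> [k+1..<n+1]) \<subseteq> {2..n}" using k by (auto intro!: ne)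
  qed
qed

lemma rel_F: "\<tau> \<in> H \<Longrightarrow> k = inv_into {1..n} \<tau> 1 \<Longrightarrow>
   pres_eq RF (wF n) (pos_word (map \<tau> [k+1..<n+1]) @ pos_word (map \<tau> [1..<k]))"
  by (rule pres_eq.rel) (auto simp: F_rels_def wF_def)

lemma L1: "pres_eq RG u v \<Longrightarrow> pres_eq RF (thet n u) (thet n v)"
proof (induction rule: pres_eq.induct)
  case (refl w) then show ?case by (rule pres_eq.refl)
next
  case (sym u v) show ?case using sym.IH by (rule pres_eq.sym)
next
  case (trans u v w) show ?case using trans.IH by (rule pres_eq.trans)
next
  case (cancel x)
  obtain i b where x: "x = (i, b)" by (cases x)
  show ?case
  proof (cases "i = 1")
    case True
    show ?thesis
    proof (cases b)
      case b: True
      show ?thesis using x True b pe_inv_l[of RF "wF n"] by (simp add: th_def letter_inv_def)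
    next
      case b: False
      show ?thesis using x True b pe_inv_r[of RF "wF n"] by (simp add: th_def letter_inv_def)
    qed
  next
    case False
    then show ?thesis using x pres_eq.cancel[of RF x] by (simp add: th_def letter_inv_def)
  qed
next
  case (rel u v)
  then obtain \<sigma> where s: "\<sigma> \<in> H" and u: "u = zW n" and v: "v = pos_word (map \<sigma> [1..<n+1])"
    by (auto simp: G_rels_def zW_def)
  obtain k where k: "k \<in> {1..n}" "\<sigma> k = 1" "inv_into {1..n} \<sigma> 1 = k"
    "[1..<n+1] = [1..<k] @ k # [k+1..<n+1]"
    "set (map \<sigma> [1..<k]) \<subseteq> {2..n}" "set (map \<sigma> [k+1..<n+1]) \<subseteq> {2..n}"
    by (rule decomp[OF s])
  define P where "P = pos_word (map \<sigma> [1..<k])"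
  define S where "S = pos_word (map \<sigma> [k+1..<n+1])"
  define w where "w = wF n"
  have tP: "thet n P = P" unfolding P_def using k(5) by (intro thet_pos_word) auto
  have tS: "thet n S = S" unfolding S_def using k(6) by (intro thet_pos_word) auto
  have tv: "thet n v = P @ invw w @ S"
    unfolding v k(4) using tP tS by (simp add: P_def S_def k(2) th_def w_def)
  have tu: "thet n u = invw w @ w"
    using n3 by (simp add: u zW_eq th_def w_def wF_no1)
  have rf: "pres_eq RF w (S @ P)" unfolding w_def S_def P_def by (rule rel_F[OF s k(3)[symmetric]])
  have A: "pres_eq RF (invw w @ S @ P) []"
  proof -
    have "pres_eq RF (invw w @ (S @ P) @ []) (invw w @ w @ [])"
      by (rule pe_app3[OF pres_eq.sym[OF rf]])
    then show ?thesis using pres_eq.trans[OF _ pe_inv_l[of RF w]] by simp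
  qed
  have B: "pres_eq RF (P @ invw w @ S) []"
  proof -
    have "pres_eq RF (P @ invw w @ S) (P @ invw w @ S @ P @ invw P)"
      using pe_cancel_r[of RF "P @ invw w @ S" P] by (simp add: pres_eq.sym)
    also have "pres_eq RF (P @ invw w @ S @ P @ invw P) (P @ [] @ invw P)"
      using pe_app3[OF A, of P "invw P"] by simp
    also have "pres_eq RF (P @ [] @ invw P) []" using pe_inv_r[of RF P] by simp
    finally show ?thesis by simp
  qed
  show ?case unfolding tu tv by (rule pres_eq.trans[OF pe_inv_l pres_eq.sym[OF B]])
next
  case (ctxt u v p q)
  then show ?case by (simp add: pe_app3)
qed

lemma L2: "pres_eq RG u v \<Longrightarrow> cnt u = cnt v"
proof (induction rule: pres_eq.induct)
  case (cancel x) then show ?case by (simp add: cv_def letter_inv_def)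
next
  case (rel u v)
  then obtain \<sigma> where s: "\<sigma> \<in> H" and u: "u = zW n" and v: "v = pos_word (map \<sigma> [1..<n+1])"
    by (auto simp: G_rels_def zW_def)
  obtain k where k: "k \<in> {1..n}" "\<sigma> k = 1" "inv_into {1..n} \<sigma> 1 = k"
    "[1..<n+1] = [1..<k] @ k # [k+1..<n+1]"
    "set (map \<sigma> [1..<k]) \<subseteq> {2..n}" "set (map \<sigma> [k+1..<n+1]) \<subseteq> {2..n}"
    by (rule decomp[OF s])
  have cP: "cnt (pos_word (map \<sigma> [1..<k])) = 0" using k(5) by (intro cnt_pos_word) auto
  have cS: "cnt (pos_word (map \<sigma> [k+1..<n+1])) = 0" using k(6) by (intro cnt_pos_word) auto
  have "cnt v = 1" unfolding v k(4) using cP cS by (simp add: k(2) cv_def)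
  moreover have "cnt u = 1" using n3 by (simp add: u zW_eq wF_no1 cv_def)
  ultimately show ?case by simp
qed auto

lemma L3: "pres_eq RF u v \<Longrightarrow> pres_eq RG u v"
proof (induction rule: pres_eq.induct)
  case (refl w) then show ?case by (rule pres_eq.refl)
next
  case (sym u v) show ?case using sym.IH by (rule pres_eq.sym)
next
  case (trans u v w) show ?case using trans.IH by (rule pres_eq.trans)
next
  case (cancel x) then show ?case by (rule pres_eq.cancel)
next
  case (ctxt u v p q) then show ?case by (simp add: pe_app3)
next
  case (rel u v)
  then obtain \<tau> where s: "\<tau> \<in> H" and u: "u = wF n" and
    v: "v = pos_word (map \<tau> ([inv_into {1..n} \<tau> 1 + 1..<n+1] @ [1..<inv_into {1..n} \<tau> 1]))"
    by (auto simp: F_rels_def wF_def)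
  obtain k where k: "k \<in> {1..n}" "\<tau> k = 1" "inv_into {1..n} \<tau> 1 = k"
    "[1..<n+1] = [1..<k] @ k # [k+1..<n+1]"
    "set (map \<tau> [1..<k]) \<subseteq> {2..n}" "set (map \<tau> [k+1..<n+1]) \<subseteq> {2..n}"
    by (rule decomp[OF s])
  define P where "P = pos_word (map \<tau> [1..<k])"
  define S where "S = pos_word (map \<tau> [k+1..<n+1])"
  define w where "w = wF n"
  define a where "a = [(1::nat, True)]"
  have v': "v = S @ P" unfolding v k(3) by (simp add: S_def P_def)
  have z: "zW n = a @ w" using n3 by (simp add: zW_eq a_def w_def)
  have rg: "pres_eq RG (a @ w) (P @ a @ S)"
    using rel_G[OF s] unfolding z[symmetric] k(4) by (simp add: P_def S_def k(2) a_def)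
  have Pw: "P \<in> words_over {1..n}" unfolding P_def using k(5) by auto
  have "pres_eq RG (a @ S @ P) (invw P @ P @ a @ S @ P)"
    using pe_cancel_l[of RG P "a @ S @ P"] by (rule pres_eq.sym)
  also have "pres_eq RG (invw P @ P @ a @ S @ P) (invw P @ a @ w @ P)"
    using pe_app3[OF pres_eq.sym[OF rg], of "invw P" P] by simp
  also have "invw P @ a @ w @ P = invw P @ zW n @ P" by (simp add: z)
  also have "pres_eq RG (invw P @ zW n @ P) (invw P @ P @ zW n)"
    using pe_app3[OF zcomm[OF Pw], of "invw P" "[]"] by simp
  also have "pres_eq RG (invw P @ P @ zW n) (zW n)" by (rule pe_cancel_l)
  finally have c: "pres_eq RG (a @ S @ P) (a @ w)" by (simp add: z)
  have "pres_eq RG w (invw a @ a @ w)" using pe_cancel_l[of RG a w] by (rule pres_eq.sym)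
  also have "pres_eq RG (invw a @ a @ w) (invw a @ a @ S @ P)"
    using pe_app3[OF pres_eq.sym[OF c], of "invw a" "[]"] by simp
  also have "pres_eq RG (invw a @ a @ S @ P) (S @ P)" by (rule pe_cancel_l)
  finally show ?case by (simp add: u v' w_def)
qed

lemma zp_succ: "pres_eq R (zp n m @ zW n) (zp n (m+1))"
proof (cases "0 \<le> m")
  case True
  then have "nat (m+1) = Suc (nat m)" by simp
  then show ?thesis using True by (simp add: zp_def concat_rep_Suc' pres_eq.refl del: replicate_Suc)
next
  case False
  define k where "k = nat (-m - 1)"
  have e: "nat (-m) = Suc k" using False by (simp add: k_def)
  have e2: "zp n (m+1) = concat (replicate k (invw (zW n)))"
    using False by (auto simp: zp_def k_def)
  have "zp n m = concat (replicate k (invw (zW n))) @ invw (zW n)"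
    using False by (simp add: zp_def e concat_rep_Suc' del: replicate_Suc)
  then show ?thesis using pe_cancel_r'[of R "concat (replicate k (invw (zW n)))" "zW n"]
    by (simp add: e2)
qed

lemma zp_pred: "pres_eq R (zp n m @ invw (zW n)) (zp n (m - 1))"
proof -
  have "pres_eq R (zp n m @ invw (zW n)) ((zp n (m-1) @ zW n) @ invw (zW n))"
    by (rule pe_app[OF pres_eq.sym[OF zp_succ[of R "m-1", simplified]] pres_eq.refl])
  also have "pres_eq R ((zp n (m-1) @ zW n) @ invw (zW n)) (zp n (m-1))"
    using pe_cancel_r[of R "zp n (m-1)" "zW n"] by simp
  finally show ?thesis .
qed

lemma A1: "pres_eq RG [(1,True)] (invw (wF n) @ zW n)"
proof -
  have r: "pres_eq RG (zW n) (wF n @ [(1,True)])"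
    using rot[of 1] n3 by (simp add: wF_def numeral_2_eq_2)
  have "pres_eq RG (invw (wF n) @ zW n @ []) (invw (wF n) @ (wF n @ [(1,True)]) @ [])"
    by (rule pe_app3[OF r])
  then have "pres_eq RG (invw (wF n) @ zW n) [(1,True)]"
    using pe_cancel_l[of RG "wF n" "[(1,True)]"] by (auto intro: pres_eq.trans)
  then show ?thesis by (rule pres_eq.sym)
qed

lemma A2: "pres_eq RG [(1,False)] (wF n @ invw (zW n))"
  using pe_cancel_l'[of RG "wF n" "[(1,False)]"] n3
  by (simp add: zW_eq letter_inv_def pres_eq.sym)

lemma L4: "u \<in> words_over {1..n} \<Longrightarrow> pres_eq RG u (thet n u @ zp n (cnt u))"
proof (induction u)
  case Nil then show ?case by (simp add: zp_def pres_eq.refl)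
next
  case (Cons x u)
  define c where "c = cnt u"
  define Y where "Y = thet n u @ zp n c"
  have IH: "pres_eq RG u Y" using Cons by (simp add: Y_def c_def)
  have "u \<in> words_over {1..n}" using Cons.prems by simp
  then have "thet n u \<in> words_over {1..n}" by (rule words_over_mono[OF thet_words]) auto
  then have Yw: "Y \<in> words_over {1..n}" using zp_words[of n c] by (simp add: Y_def)
  have s1: "pres_eq RG ([x] @ u) ([x] @ Y)" by (rule pe_app[OF pres_eq.refl IH])
  obtain i b where x: "x = (i,b)" by (cases x)
  show ?case
  proof (cases "i = 1")
    case False
    then show ?thesis using s1 by (simp add: x th_def cv_def Y_def c_def)
  next
    case i: True
    show ?thesis
    proof (cases b)
      case True
      have "pres_eq RG ([x] @ Y) (invw (wF n) @ zW n @ Y)"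
        using x i True pe_app[OF A1 pres_eq.refl, of Y] by simp
      also have "pres_eq RG (invw (wF n) @ zW n @ Y) (invw (wF n) @ Y @ zW n)"
        using pe_app3[OF zcomm[OF Yw], of "invw (wF n)" "[]"] by simp
      also have "invw (wF n) @ Y @ zW n = invw (wF n) @ thet n u @ zp n c @ zW n"
        by (simp add: Y_def)
      also have "pres_eq RG (invw (wF n) @ thet n u @ zp n c @ zW n)
                            (invw (wF n) @ thet n u @ zp n (c+1))"
        using pe_app3[OF zp_succ, where p="invw (wF n) @ thet n u" and q="[]"] by simp
      finally have "pres_eq RG ([x] @ Y) (invw (wF n) @ thet n u @ zp n (c+1))" by simp
      then show ?thesis using s1 by (simp add: x i True th_def cv_def c_def add.commute pres_eq.trans)
    next
      case False
      have "pres_eq RG ([x] @ Y) (wF n @ invw (zW n) @ Y)"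
        using x i False pe_app[OF A2 pres_eq.refl, of Y] by simp
      also have "pres_eq RG (wF n @ invw (zW n) @ Y) (wF n @ Y @ invw (zW n))"
        using pe_app3[OF pe_comm_inv[OF zcomm[OF Yw]], of "wF n" "[]"] by simp
      also have "wF n @ Y @ invw (zW n) = wF n @ thet n u @ zp n c @ invw (zW n)"
        by (simp add: Y_def)
      also have "pres_eq RG (wF n @ thet n u @ zp n c @ invw (zW n))
                            (wF n @ thet n u @ zp n (c-1))"
        using pe_app3[OF zp_pred, where p="wF n @ thet n u" and q="[]"] by simp
      finally have "pres_eq RG ([x] @ Y) (wF n @ thet n u @ zp n (c-1))" by simp
      then show ?thesis using s1 by (simp add: x i False th_def cv_def c_def pres_eq.trans)
    qed
  qed
qed

definition Phi :: "nat word set \<Rightarrow> nat word set \<times> int" where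
  "Phi A = (pres_class {2..n} RF (thet n (SOME u. u \<in> A)), cnt (SOME u. u \<in> A))"

lemma Phi_cls:
  assumes a: "a \<in> words_over {1..n}"
  shows "Phi (pres_class {1..n} RG a) = (pres_class {2..n} RF (thet n a), cnt a)"
proof -
  have "a \<in> pres_class {1..n} RG a" using a by (simp add: pres_class_def pres_eq.refl)
  then have "(SOME u. u \<in> pres_class {1..n} RG a) \<in> pres_class {1..n} RG a" by (rule someI)
  then have e: "pres_eq RG a (SOME u. u \<in> pres_class {1..n} RG a)" by (simp add: pres_class_def)
  show ?thesis unfolding Phi_def using cls_eq[OF L1[OF e]] L2[OF e] by simp
qed

lemma carrG: "carrier (G_n n H) = pres_class {1..n} RG ` words_over {1..n}"
  by (simp add: G_n_def presented_group_def)

lemma carrF: "carrier (F_n n H) = pres_class {2..n} RF ` words_over {2..n}"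
  by (simp add: F_n_def presented_group_def)

lemma Phi_iso: "Phi \<in> iso (G_n n H) (F_n n H \<times>\<times> integer_group)"
proof -
  have cls_in: "pres_class {2..n} RF v \<in> carrier (F_n n H)" if "v \<in> words_over {2..n}" for v
    using that carrF by simp
  have carr: "Phi \<in> carrier (G_n n H) \<rightarrow> carrier (F_n n H \<times>\<times> integer_group)"
  proof
    fix A assume "A \<in> carrier (G_n n H)"
    then obtain a where a: "a \<in> words_over {1..n}" "A = pres_class {1..n} RG a" by (auto simp: carrG)
    show "Phi A \<in> carrier (F_n n H \<times>\<times> integer_group)"
      using a Phi_cls cls_in[OF thet_words[OF a(1)]] by simp
  qed
  have mult: "Phi (A \<otimes>\<^bsub>G_n n H\<^esub> B) = Phi A \<otimes>\<^bsub>F_n n H \<times>\<times> integer_group\<^esub> Phi B"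
    if AB: "A \<in> carrier (G_n n H)" "B \<in> carrier (G_n n H)" for A B
  proof -
    obtain a where a: "a \<in> words_over {1..n}" "A = pres_class {1..n} RG a" using AB(1) by (auto simp: carrG)
    obtain b where b: "b \<in> words_over {1..n}" "B = pres_class {1..n} RG b" using AB(2) by (auto simp: carrG)
    have "A \<otimes>\<^bsub>G_n n H\<^esub> B = pres_class {1..n} RG (a @ b)"
      unfolding a b G_n_def by (rule cls_mult[OF a(1) b(1)])
    then have l: "Phi (A \<otimes>\<^bsub>G_n n H\<^esub> B) = (pres_class {2..n} RF (thet n a @ thet n b), cnt a + cnt b)"
      using Phi_cls[of "a @ b"] a b by simp
    have "pres_class {2..n} RF (thet n a) \<otimes>\<^bsub>F_n n H\<^esub> pres_class {2..n} RF (thet n b)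
          = pres_class {2..n} RF (thet n a @ thet n b)"
      unfolding F_n_def by (rule cls_mult[OF thet_words[OF a(1)] thet_words[OF b(1)]])
    then show ?thesis using l Phi_cls[OF a(1)] Phi_cls[OF b(1)] a b by simp
  qed
  have inj: "inj_on Phi (carrier (G_n n H))"
  proof (rule inj_onI)
    fix A B assume A: "A \<in> carrier (G_n n H)" and B: "B \<in> carrier (G_n n H)" and e: "Phi A = Phi B"
    obtain a where a: "a \<in> words_over {1..n}" "A = pres_class {1..n} RG a" using A by (auto simp: carrG)
    obtain b where b: "b \<in> words_over {1..n}" "B = pres_class {1..n} RG b" using B by (auto simp: carrG)
    have e1: "pres_class {2..n} RF (thet n a) = pres_class {2..n} RF (thet n b)" and e2: "cnt a = cnt b"
      using e Phi_cls[OF a(1)] Phi_cls[OF b(1)] a b by auto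
    have f: "pres_eq RG (thet n a) (thet n b)"
      by (rule L3[OF cls_eqD[OF thet_words[OF b(1)] e1]])
    have "pres_eq RG a (thet n a @ zp n (cnt a))" by (rule L4[OF a(1)])
    also have "pres_eq RG (thet n a @ zp n (cnt a)) (thet n b @ zp n (cnt b))"
      unfolding e2 by (rule pe_app[OF f pres_eq.refl])
    also have "pres_eq RG (thet n b @ zp n (cnt b)) b" by (rule pres_eq.sym[OF L4[OF b(1)]])
    finally show "A = B" unfolding a b by (rule cls_eq)
  qed
  have surj: "Phi ` carrier (G_n n H) = carrier (F_n n H \<times>\<times> integer_group)"
  proof
    show "Phi ` carrier (G_n n H) \<subseteq> carrier (F_n n H \<times>\<times> integer_group)"
      using carr by (simp only: image_subset_iff Pi_iff)
  next
    show "carrier (F_n n H \<times>\<times> integer_group) \<subseteq> Phi ` carrier (G_n n H)"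
    proof
      fix y assume "y \<in> carrier (F_n n H \<times>\<times> integer_group)"
      then obtain v m where y: "y = (pres_class {2..n} RF v, m)" and v: "v \<in> words_over {2..n}"
        by (auto simp: carrF)
      have v1: "v \<in> words_over {1..n}" using v by (rule words_over_mono) auto
      have no1: "thet n v = v" using v by (intro thet_no1) (auto simp: words_over_def)
      have cv0: "cnt v = 0" using v by (induction v) (auto simp: cv_def)
      have w: "v @ zp n m \<in> words_over {1..n}" using v1 zp_words[of n m] by simp
      have "pres_eq RF (v @ thet n (zp n m)) (v @ [])"
        using n3 by (intro pe_app[OF pres_eq.refl] thet_zp) simp
      then have "Phi (pres_class {1..n} RG (v @ zp n m)) = y"
        using Phi_cls[OF w] n3 by (simp add: y no1 cv0 cnt_zp cls_eq)
      moreover have "pres_class {1..n} RG (v @ zp n m) \<in> carrier (G_n n H)"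
        using w by (simp add: carrG)
      ultimately show "y \<in> Phi ` carrier (G_n n H)" by (metis image_eqI)
    qed
  qed
  show ?thesis unfolding iso_def hom_def bij_betw_def using carr mult inj surj by auto
qed

lemma Phi_z: "Phi (pres_class {1..n} RG (pos_word [1..<n+1])) = (\<one>\<^bsub>F_n n H\<^esub>, 1)"
proof -
  have "Phi (pres_class {1..n} RG (zW n)) = (pres_class {2..n} RF (thet n (zW n)), 1)"
    using Phi_cls[OF zW_words] cnt_zp[of n 1] n3 by (simp add: zp_def)
  moreover have "pres_class {2..n} RF (thet n (zW n)) = pres_class {2..n} RF []"
    using thet_zp[where R=RF and m=1 and n=n] n3 by (intro cls_eq) (simp add: zp_def)
  ultimately show ?thesis by (simp add: zW_def F_n_def presented_group_def)
qed

end

theorem mainTheorem10: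
  fixes n :: nat and H :: "(nat \<Rightarrow> nat) set"
  assumes "n \<ge> 3"
    and "subgroup H (sym_group n)"
    and "generate (sym_group n) {n_cycle n} \<subseteq> H"
  shows "\<exists>\<phi>. \<phi> \<in> iso (G_n n H) (F_n n H \<times>\<times> integer_group)
             \<and> \<phi> (pres_class {1..n} (G_rels n H) (pos_word [1..<n+1]))
                 = (\<one>\<^bsub>F_n n H\<^esub>, 1)"
proof -
  have "n_cycle n \<in> H" using assms(3) generate.incl[of "n_cycle n" "{n_cycle n}" "sym_group n"] by auto
  then have "setup3 n H" using assms by (simp add: setup3_def)
  then interpret setup3 n H .
  show ?thesis using Phi_iso Phi_z by blast
qed

end
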